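(* Let $G$ be a circle of circumference $1$, let $x_1,\dots,x_n\in G$ be pairwise distinct with no two of them antipodal, and let $y_1,\dots,y_n\in G$. Let $\{x_i,x_j\}\in A$ be a nearly antipodal pair. If $$\sum_{k=1}^n d(x_i,x_k)+\sum_{k=1}^n d(x_j,x_k)>\sum_{k=1}^n d(x_i,y_k)+\sum_{k=1}^n d(x_j,y_k),$$ then $\alpha^Y_{ij}>\alpha^X_{ij}$.
   Context: $d(x,y)$ is the length of the shorter arc between $x,y$; $\hat{x}$ is the antipodal point of $x$. For points $p,q$ that are neither equal nor antipodal, $(p,q)$ denotes the shorter open arc and $[p,q]$ the shorter closed arc between them. Two distinct points $x_i,x_j$ ($i\ne j$) form a nearly antipodal pair if no $x_k$ lies in $(x_i,\hat{x}_j)$ or in $(x_j,\hat{x}_i)$; $A$ is the set of nearly antipodal pairs. The critical arc of $\{x_i,x_j\}\in A$ is $\mathrm{crit}(x_i,x_j)=G\setminus[\hat{x}_i,\hat{x}_j]$ (the long open arc between $\hat x_i$ and $\hat x_j$). $\alpha^X_{ij}=|\{k:x_k\in\mathrm{crit}(x_i,x_j)\}|$ and $\alpha^Y_{ij}=|\{k:y_k\in\mathrm{crit}(x_i,x_j)\}|$. *)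

theory Defs
  imports Complex_Main
begin

text \<open>The circle G of circumference 1 is modelled as the half-open interval [0,1) of reals,
  with the point t corresponding to arc-length position t (mod 1).\<close>

definition circG :: "real set" where
  "circG = {0..<1}"

definition cdist :: "real \<Rightarrow> real \<Rightarrow> real" where
  "cdist x y = min (frac (x - y)) (frac (y - x))"

definition antip :: "real \<Rightarrow> real" where
  "antip x = frac (x + 1/2)"

definition ccw_open_arc :: "real \<Rightarrow> real \<Rightarrow> real set" where
  "ccw_open_arc p q = {z \<in> circG. 0 < frac (z - p) \<and> frac (z - p) < frac (q - p)}"

text \<open>Shorter open arc (p,q), for p, q neither equal nor antipodal.\<close>
definition short_open_arc :: "real \<Rightarrow> real \<Rightarrow> real set" where
  "short_open_arc p q = (if frac (q - p) < 1/2 then ccw_open_arc p q else ccw_open_arc q p)"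

definition short_closed_arc :: "real \<Rightarrow> real \<Rightarrow> real set" where
  "short_closed_arc p q = short_open_arc p q \<union> {p, q}"

definition nearly_antipodal :: "nat \<Rightarrow> (nat \<Rightarrow> real) \<Rightarrow> nat \<Rightarrow> nat \<Rightarrow> bool" where
  "nearly_antipodal n x i j \<longleftrightarrow>
     i \<in> {1..n} \<and> j \<in> {1..n} \<and> i \<noteq> j \<and> x i \<noteq> x j \<and>
     (\<forall>k\<in>{1..n}. x k \<notin> short_open_arc (x i) (antip (x j)) \<and>
                  x k \<notin> short_open_arc (x j) (antip (x i)))"

definition crit :: "real \<Rightarrow> real \<Rightarrow> real set" where
  "crit a b = circG - short_closed_arc (antip a) (antip b)"

definition alpha :: "nat \<Rightarrow> (nat \<Rightarrow> real) \<Rightarrow> real \<Rightarrow> real \<Rightarrow> nat" where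
  "alpha n p a b = card {k \<in> {1..n}. p k \<in> crit a b}"

end

theory Submission imports Defs begin
lemma frac_cases: "-1 \<le> t \<Longrightarrow> t < 2 \<Longrightarrow>
  (t < 0 \<and> frac t = t + 1) \<or> (0 \<le> t \<and> t < 1 \<and> frac t = t) \<or> (1 \<le> t \<and> frac t = t - 1)"
proof -
  assume h: "-1 \<le> t" "t < 2"
  consider "t < 0" | "0 \<le> t \<and> t < 1" | "1 \<le> t" by linarith
  then show ?thesis
  proof cases
    case 1
    have "floor t = -1" using h 1 by (simp add: floor_eq_iff)
    then show ?thesis using 1 by (simp add: frac_def)
  next
    case 2
    then show ?thesis by (simp add: frac_eq)
  next
    case 3
    have "floor t = 1" using h 3 by (simp add: floor_eq_iff)
    then show ?thesis using 3 by (simp add: frac_def)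
  qed
qed

lemma antip_cases: "0 \<le> a \<Longrightarrow> a < 1 \<Longrightarrow> (a < 1/2 \<and> antip a = a + 1/2) \<or> (1/2 \<le> a \<and> antip a = a - 1/2)"
  unfolding antip_def using frac_cases[of "a+1/2"] by auto



lemma fd: "0 \<le> u \<Longrightarrow> u < 1 \<Longrightarrow> 0 \<le> v \<Longrightarrow> v < 1 \<Longrightarrow>
  frac (u - v) = (if v \<le> u then u - v else u - v + 1)"
  using frac_cases[of "u - v"] by auto

lemma antip_bd: "0 \<le> a \<Longrightarrow> a < 1 \<Longrightarrow> 0 \<le> antip a \<and> antip a < 1"
  using antip_cases by fastforce


lemma cd: "0 \<le> u \<Longrightarrow> u < 1 \<Longrightarrow> 0 \<le> v \<Longrightarrow> v < 1 \<Longrightarrow>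
  cdist u v = (if \<bar>u - v\<bar> \<le> 1/2 then \<bar>u - v\<bar> else 1 - \<bar>u - v\<bar>)"
  unfolding cdist_def min_def by (simp add: fd) 

lemma soa: "0 \<le> p \<Longrightarrow> p < 1 \<Longrightarrow> 0 \<le> q \<Longrightarrow> q < 1 \<Longrightarrow> \<bar>q - p\<bar> \<noteq> 1/2 \<Longrightarrow>
  z \<in> short_open_arc p q \<longleftrightarrow> 0 \<le> z \<and> z < 1 \<and>
    (if \<bar>q - p\<bar> < 1/2 then min p q < z \<and> z < max p q else z < min p q \<or> max p q < z)"
  unfolding short_open_arc_def ccw_open_arc_def circG_def
  apply (cases "0 \<le> z \<and> z < 1")
   apply (auto simp: fd abs_if min_def max_def simp del: frac_gt_0_iff frac_eq_0_iff split: if_splits)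
  done

lemma antip_neq: "0 \<le> a \<Longrightarrow> a < 1 \<Longrightarrow> 0 \<le> b \<Longrightarrow> b < 1 \<Longrightarrow> b \<noteq> antip a \<Longrightarrow> \<bar>b - a\<bar> \<noteq> 1/2"
  using antip_cases[of a] by (auto simp: abs_if split: if_splits)

lemma X2: fixes a b z h A B :: real
  assumes "(a < h \<and> A = a + h) \<or> (h \<le> a \<and> A = a - h)"
   "(b < h \<and> B = b + h) \<or> (h \<le> b \<and> B = b - h)"
   "(if \<bar>B - A\<bar> < h then min A B < z \<and> z < max A B else z < min A B \<or> max A B < z) \<or> z = A \<or> z = B"
   "0 \<le> a" "a < 1" "0 \<le> b" "b < 1" "0 \<le> z" "z < 1" "2*h = 1" "\<bar>b - a\<bar> \<noteq> h" "a \<noteq> b"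
  shows "(if \<bar>a - z\<bar> \<le> h then \<bar>a - z\<bar> else 1 - \<bar>a - z\<bar>) + (if \<bar>b - z\<bar> \<le> h then \<bar>b - z\<bar> else 1 - \<bar>b - z\<bar>)
    = 1 - (if \<bar>a - b\<bar> \<le> h then \<bar>a - b\<bar> else 1 - \<bar>a - b\<bar>)"
  using assms by (smt (verit))

lemma L2:
  assumes a: "0 \<le> a" "a < 1" and b: "0 \<le> b" "b < 1" and z: "0 \<le> z" "z < 1" and ab: "a \<noteq> b" "b \<noteq> antip a"
    and nc: "z \<notin> crit a b"
  shows "cdist a z + cdist b z = 1 - cdist a b"
proof -
  obtain A B where AB: "A = antip a" "B = antip b" by auto
  have hA: "0 \<le> A" "A < 1" using AB antip_bd[OF a] by auto
  have hB: "0 \<le> B" "B < 1" using AB antip_bd[OF b] by auto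
  have ac: "(a < 1/2 \<and> A = a + 1/2) \<or> (1/2 \<le> a \<and> A = a - 1/2)" using AB antip_cases[OF a] by auto
  have bc: "(b < 1/2 \<and> B = b + 1/2) \<or> (1/2 \<le> b \<and> B = b - 1/2)" using AB antip_cases[OF b] by auto
  have nh: "\<bar>b - a\<bar> \<noteq> 1/2" using antip_neq[OF a b ab(2)] .
  have nh2: "\<bar>B - A\<bar> \<noteq> 1/2" using nh ac bc a b by (auto simp: abs_if)
  have zz: "z \<in> short_open_arc A B \<or> z = A \<or> z = B" using z nc AB by (auto simp: crit_def circG_def short_closed_arc_def)
  have zs: "z \<in> short_open_arc A B \<longleftrightarrow> 0 \<le> z \<and> z < 1 \<and> (if \<bar>B - A\<bar> < 1/2 then min A B < z \<and> z < max A B else z < min A B \<or> max A B < z)"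
    by (rule soa[OF hA hB nh2])
  have zz': "(if \<bar>B - A\<bar> < 1/2 then min A B < z \<and> z < max A B else z < min A B \<or> max A B < z) \<or> z = A \<or> z = B"
    using zz zs by metis
  show ?thesis
    unfolding cd[OF a z] cd[OF b z] cd[OF a b]
    by (rule X2[OF ac bc zz' a b z _ nh ab(1)]) simp
qed

lemma X: fixes a b z h :: real
  assumes "if \<bar>b - a\<bar> < h then min a b \<le> z \<and> z \<le> max a b else z \<le> min a b \<or> max a b \<le> z"
   "0 \<le> a" "a < 1" "0 \<le> b" "b < 1" "0 \<le> z" "z < 1" "2*h = 1" "\<bar>b - a\<bar> \<noteq> h"
  shows "(if \<bar>a - z\<bar> \<le> h then \<bar>a - z\<bar> else 1 - \<bar>a - z\<bar>) + (if \<bar>b - z\<bar> \<le> h then \<bar>b - z\<bar> else 1 - \<bar>b - z\<bar>)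
    = (if \<bar>a - b\<bar> \<le> h then \<bar>a - b\<bar> else 1 - \<bar>a - b\<bar>)"
  using assms by (smt (z3))

lemma Y: fixes a b z h A B :: real
  assumes "(a < h \<and> A = a + h) \<or> (h \<le> a \<and> A = a - h)"
   "(b < h \<and> B = b + h) \<or> (h \<le> b \<and> B = b - h)"
   "\<not> (if \<bar>B - A\<bar> < h then min A B < z \<and> z < max A B else z < min A B \<or> max A B < z)"
   "\<not> (if \<bar>B - a\<bar> < h then min a B < z \<and> z < max a B else z < min a B \<or> max a B < z)"
   "\<not> (if \<bar>A - b\<bar> < h then min b A < z \<and> z < max b A else z < min b A \<or> max b A < z)"
   "0 \<le> a" "a < 1" "0 \<le> b" "b < 1" "0 \<le> z" "z < 1" "2*h = 1" "\<bar>b - a\<bar> \<noteq> h" "a \<noteq> b"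
   "z \<noteq> A" "z \<noteq> B"
  shows "if \<bar>b - a\<bar> < h then min a b \<le> z \<and> z \<le> max a b else z \<le> min a b \<or> max a b \<le> z"
  using assms by (smt (z3))

lemma L3:
  assumes a: "0 \<le> a" "a < 1" and b: "0 \<le> b" "b < 1" and z: "0 \<le> z" "z < 1" and ab: "a \<noteq> b" "b \<noteq> antip a"
    and c: "z \<in> crit a b" "z \<notin> short_open_arc a (antip b)" "z \<notin> short_open_arc b (antip a)"
    "z \<noteq> antip a" "z \<noteq> antip b"
  shows "cdist a z + cdist b z = cdist a b"
proof -
  obtain A B where AB: "A = antip a" "B = antip b" by auto
  have hA: "0 \<le> A" "A < 1" using AB antip_bd[OF a] by auto
  have hB: "0 \<le> B" "B < 1" using AB antip_bd[OF b] by auto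
  have ac: "(a < 1/2 \<and> A = a + 1/2) \<or> (1/2 \<le> a \<and> A = a - 1/2)" using AB antip_cases[OF a] by auto
  have bc: "(b < 1/2 \<and> B = b + 1/2) \<or> (1/2 \<le> b \<and> B = b - 1/2)" using AB antip_cases[OF b] by auto
  have nh: "\<bar>b - a\<bar> \<noteq> 1/2" using antip_neq[OF a b ab(2)] .
  have nh2: "\<bar>B - A\<bar> \<noteq> 1/2" using nh ac bc a b by (auto simp: abs_if)
  have nh3: "\<bar>B - a\<bar> \<noteq> 1/2" using ab(1) bc a b by (elim disjE conjE; simp add: abs_if; linarith)
  have nh4: "\<bar>A - b\<bar> \<noteq> 1/2" using ab(1) ac a b by (elim disjE conjE; simp add: abs_if; linarith)
  have zz: "z \<notin> short_open_arc A B" using c(1) AB by (auto simp: crit_def short_closed_arc_def)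
  hence zz': "\<not> (if \<bar>B - A\<bar> < 1/2 then min A B < z \<and> z < max A B else z < min A B \<or> max A B < z)"
    using soa[OF hA hB nh2, of z] z by metis
  have z3: "\<not> (if \<bar>B - a\<bar> < 1/2 then min a B < z \<and> z < max a B else z < min a B \<or> max a B < z)"
    using soa[OF a hB nh3, of z] z c(2)[folded AB(2)] by metis
  have z4: "\<not> (if \<bar>A - b\<bar> < 1/2 then min b A < z \<and> z < max b A else z < min b A \<or> max b A < z)"
    using soa[OF b hA nh4, of z] z c(3)[folded AB(1)] by metis
  have btw: "if \<bar>b - a\<bar> < 1/2 then min a b \<le> z \<and> z \<le> max a b else z \<le> min a b \<or> max a b \<le> z"
  proof (rule Y[of a "1/2" A b B z, OF ac bc zz' z3 z4 a b z _ nh ab(1)])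
    show "2 * (1/2::real) = 1" by simp
    show "z \<noteq> A" using c(4) AB by simp
    show "z \<noteq> B" using c(5) AB by simp
  qed
  show ?thesis
    unfolding cd[OF a z] cd[OF b z] cd[OF a b]
    by (rule X[OF btw a b z _ nh]) simp
qed

lemma L4:
  assumes "0 \<le> a" "a < 1" "0 \<le> b" "b < 1" "b \<noteq> antip a"
  shows "cdist a b < 1/2"
proof -
  have f1: "(a-b < 0 \<and> frac (a-b) = a-b + 1) \<or> (0 \<le> a-b \<and> a-b < 1 \<and> frac (a-b) = a-b) \<or> (1 \<le> a-b \<and> frac (a-b) = a-b - 1)"
    by (rule frac_cases) (use assms in linarith)+
  have f2: "(b-a < 0 \<and> frac (b-a) = b-a + 1) \<or> (0 \<le> b-a \<and> b-a < 1 \<and> frac (b-a) = b-a) \<or> (1 \<le> b-a \<and> frac (b-a) = b-a - 1)"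
    by (rule frac_cases) (use assms in linarith)+
  show ?thesis unfolding cdist_def min_def using f1 f2 antip_cases[OF assms(1,2)] assms by auto
qed

lemma L1:
  assumes "0 \<le> a" "a < 1" "0 \<le> b" "b < 1" "0 \<le> z" "z < 1"
  shows "cdist a z + cdist b z \<ge> cdist a b"
proof -
  define h :: real where "h = 1/2"
  have h2: "2*h = 1" unfolding h_def by simp
  show ?thesis unfolding cd[OF assms(1,2,5,6)] cd[OF assms(3,4,5,6)] cd[OF assms(1-4)] h_def[symmetric]
    using assms h2 by (smt (verit))
qed

lemma sum_ind: "finite S \<Longrightarrow> (\<Sum>k\<in>S. (if P k then c else 0)) = (c::real) * real (card {k\<in>S. P k})"
  by (simp add: sum.inter_filter[symmetric])

theorem mainTheorem8:
  fixes n :: nat and x y :: "nat \<Rightarrow> real" and i j :: nat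
  assumes xG: "\<forall>k\<in>{1..n}. x k \<in> circG"
    and yG: "\<forall>k\<in>{1..n}. y k \<in> circG"
    and distinct: "\<forall>k\<in>{1..n}. \<forall>l\<in>{1..n}. k \<noteq> l \<longrightarrow> x k \<noteq> x l"
    and nonantip: "\<forall>k\<in>{1..n}. \<forall>l\<in>{1..n}. x l \<noteq> antip (x k)"
    and A: "nearly_antipodal n x i j"
    and ineq: "(\<Sum>k=1..n. cdist (x i) (x k)) + (\<Sum>k=1..n. cdist (x j) (x k))
               > (\<Sum>k=1..n. cdist (x i) (y k)) + (\<Sum>k=1..n. cdist (x j) (y k))"
  shows "alpha n y (x i) (x j) > alpha n x (x i) (x j)"
proof -
  have ij: "i \<in> {1..n}" "j \<in> {1..n}" "i \<noteq> j" "x i \<noteq> x j"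
    and na: "\<And>k. k \<in> {1..n} \<Longrightarrow> x k \<notin> short_open_arc (x i) (antip (x j)) \<and> x k \<notin> short_open_arc (x j) (antip (x i))"
    using A unfolding nearly_antipodal_def by auto
  define a where "a = x i"
  define b where "b = x j"
  have a: "0 \<le> a" "a < 1" using xG ij(1) unfolding a_def circG_def by auto
  have b: "0 \<le> b" "b < 1" using xG ij(2) unfolding b_def circG_def by auto
  have ab: "a \<noteq> b" "b \<noteq> antip a" using ij nonantip unfolding a_def b_def by auto
  define D where "D = cdist a b"
  have D: "D < 1/2" unfolding D_def using L4[OF a b ab(2)] .
  define C where "C = crit a b"
  define g where "g = (\<lambda>k::nat. (1 - D) - (1 - 2*D) * (if x k \<in> C then 1 else 0))"
  define g' where "g' = (\<lambda>k::nat. (1 - D) - (1 - 2*D) * (if y k \<in> C then 1 else 0))"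
  have gx: "cdist a (x k) + cdist b (x k) = g k" if k: "k \<in> {1..n}" for k
  proof -
    have z: "0 \<le> x k" "x k < 1" using xG k unfolding circG_def by auto
    show ?thesis
    proof (cases "x k \<in> C")
      case True
      have "cdist a (x k) + cdist b (x k) = D" unfolding D_def
        by (rule L3[OF a b z ab]) (use True na[OF k] nonantip k ij in \<open>auto simp: C_def a_def b_def\<close>)
      then show ?thesis using True unfolding g_def by simp
    next
      case False
      have "cdist a (x k) + cdist b (x k) = 1 - D" unfolding D_def
        by (rule L2[OF a b z ab]) (use False in \<open>auto simp: C_def\<close>)
      then show ?thesis using False unfolding g_def by simp
    qed
  qed
  have gy: "cdist a (y k) + cdist b (y k) \<ge> g' k" if k: "k \<in> {1..n}" for k
  proof -
    have z: "0 \<le> y k" "y k < 1" using yG k unfolding circG_def by auto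
    show ?thesis
    proof (cases "y k \<in> C")
      case True
      have "cdist a (y k) + cdist b (y k) \<ge> D" unfolding D_def
        by (rule L1[OF a b z])
      then show ?thesis using True unfolding g'_def by simp
    next
      case False
      have "cdist a (y k) + cdist b (y k) = 1 - D" unfolding D_def
        by (rule L2[OF a b z ab]) (use False in \<open>auto simp: C_def\<close>)
      then show ?thesis using False unfolding g'_def by simp
    qed
  qed
  have sx: "(\<Sum>k=1..n. cdist a (x k)) + (\<Sum>k=1..n. cdist b (x k)) = (\<Sum>k=1..n. g k)"
    unfolding sum.distrib[symmetric] by (rule sum.cong) (auto simp: gx)
  have sy: "(\<Sum>k=1..n. cdist a (y k)) + (\<Sum>k=1..n. cdist b (y k)) \<ge> (\<Sum>k=1..n. g' k)"
    unfolding sum.distrib[symmetric] by (rule sum_mono) (auto simp: gy)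
  have gsum: "(\<Sum>k=1..n. g k) = real n * (1 - D) - (1 - 2*D) * real (alpha n x a b)"
    unfolding g_def alpha_def C_def
    by (simp add: sum_subtractf sum_distrib_left[symmetric] sum_ind)
  have gsum': "(\<Sum>k=1..n. g' k) = real n * (1 - D) - (1 - 2*D) * real (alpha n y a b)"
    unfolding g'_def alpha_def C_def
    by (simp add: sum_subtractf sum_distrib_left[symmetric] sum_ind)
  have "(1 - 2*D) * real (alpha n x a b) < (1 - 2*D) * real (alpha n y a b)"
    using ineq sx sy gsum gsum' unfolding a_def b_def by linarith
  then have "real (alpha n x a b) < real (alpha n y a b)"
    using D by (simp add: mult_less_cancel_left)
  then show ?thesis unfolding a_def b_def by simp
qed
end
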